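(* The set of $\mathcal{P}$-positions of the Wythoff variant with terminal set $T_5 = \{(x,y) \in \mathbb{Z}_{\ge 0}^2 : x+y \le 5\}$ is exactly $P_5 = T_5 \cup \{(b_n,a_n) : n \in \mathbb{N}\} \cup \{(a_n,b_n) : n \in \mathbb{N}\}$.
   Context: Positions are pairs $(x,y) \in \mathbb{Z}_{\ge 0}^2$. In the Wythoff variant with terminal set $T_5$, from a position $(x,y) \notin T_5$ a move goes to any position in $\{(u,y) : 0 \le u < x\} \cup \{(x,v) : 0 \le v < y\} \cup \{(x-t,y-t) : 1 \le t \le \min(x,y)\}$; positions in $T_5$ have no moves. Players alternate; a player with no move loses (the player who moves into $T_5$ wins). A $\mathcal{P}$-position is one from which the previous player wins with optimal play; equivalently a position is $\mathcal{P}$ iff every move from it leads to a non-$\mathcal{P}$ position. Sequences: Fibonacci numbers $F_1 = F_2 = 1$, $F_{i+2} = F_{i+1} + F_i$. Let $\sigma$ be the substitution on finite sequences over $\{1,2\}$ replacing each entry $1$ by $2$ and each entry $2$ by $2,1$. Let $C_{1,1} = (1)$, $C_{i+1,1} = \sigma(C_{i,1})$. For $i \in \mathbb{N}$ let $C_i$ be the concatenation of five copies of $C_{i,1}$. Let $(c_n)_{n \in \mathbb{N}}$ be the concatenation of $C_1, C_2, C_3, \dots$ in order, $d_n = c_n + 1$, $a_1 = 6$, $a_n = 6 + \sum_{i=1}^{n-1} c_i$, $b_1 = 12$, $b_n = 12 + \sum_{i=1}^{n-1} d_i$. *)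

theory Defs
  imports Main
begin

definition T5 :: "(nat \<times> nat) set" where
  "T5 = {(x, y). x + y \<le> 5}"

definition moves :: "nat \<times> nat \<Rightarrow> (nat \<times> nat) set" where
  "moves p = (if p \<in> T5 then {} else
     (case p of (x, y) \<Rightarrow>
        {(u, y) | u. u < x} \<union> {(x, v) | v. v < y}
        \<union> {(x - t, y - t) | t. 1 \<le> t \<and> t \<le> min x y}))"

lemma moves_decr: "q \<in> moves p \<Longrightarrow> fst q + snd q < fst p + snd p"
  by (cases p) (auto simp: moves_def split: if_splits)

function isP :: "nat \<times> nat \<Rightarrow> bool" where
  "isP p = (\<forall>q \<in> moves p. \<not> isP q)"
  by auto
termination
  by (relation "measure (\<lambda>p. fst p + snd p)") (auto dest: moves_decr)

definition sigma :: "nat list \<Rightarrow> nat list" where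
  "sigma xs = concat (map (\<lambda>e. if e = 1 then [2] else [2, 1]) xs)"

fun Ci1 :: "nat \<Rightarrow> nat list" where
  "Ci1 0 = []"
| "Ci1 (Suc 0) = [1]"
| "Ci1 (Suc (Suc i)) = sigma (Ci1 (Suc i))"

definition Cblk :: "nat \<Rightarrow> nat list" where
  "Cblk i = concat (replicate 5 (Ci1 i))"

text \<open>c n for n \<ge> 1 (1-indexed): the n-th entry of C_1 C_2 C_3 ...; each block has length
  at least 5, so the first n blocks suffice.\<close>
definition c :: "nat \<Rightarrow> nat" where
  "c n = concat (map Cblk [1..<n + 1]) ! (n - 1)"

definition d :: "nat \<Rightarrow> nat" where
  "d n = c n + 1"

definition a :: "nat \<Rightarrow> nat" where
  "a n = 6 + (\<Sum>i=1..<n. c i)"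

definition b :: "nat \<Rightarrow> nat" where
  "b n = 12 + (\<Sum>i=1..<n. d i)"

end

theory Submission
  imports Defs
begin

definition W :: "nat \<Rightarrow> nat list" where
  "W N = concat (map Cblk [1..<N+1])"

lemma sigma_Nil[simp]: "sigma [] = []" by (simp add: sigma_def)
lemma sigma_Cons[simp]: "sigma (x # xs) = (if x = 1 then [2] else [2,1]) @ sigma xs"
  by (simp add: sigma_def)
lemma sigma_append[simp]: "sigma (xs @ ys) = sigma xs @ sigma ys"
  by (simp add: sigma_def)
lemma sigma_concat: "sigma (concat xss) = concat (map sigma xss)"
  by (induction xss) auto
lemma sigma_set: "set (sigma xs) \<subseteq> {1,2}"
  by (induction xs) auto
lemma sigma_len: "length xs \<le> length (sigma xs)"
  by (induction xs) auto

lemma Ci1_Suc: "i \<ge> 1 \<Longrightarrow> Ci1 (Suc i) = sigma (Ci1 i)"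
  by (cases i) auto

lemma Ci1_len: "i \<ge> 1 \<Longrightarrow> length (Ci1 i) \<ge> 1"
proof (induction i rule: nat_induct_at_least)
  case base then show ?case by simp
next
  case (Suc n) then show ?case using Ci1_Suc[of n] sigma_len[of "Ci1 n"] by simp
qed

lemma Ci1_set: "set (Ci1 i) \<subseteq> {1,2}"
  using sigma_set by (cases i rule: Ci1.cases) auto

lemma Cblk_Suc: "i \<ge> 1 \<Longrightarrow> Cblk (Suc i) = sigma (Cblk i)"
  by (simp add: Cblk_def sigma_concat Ci1_Suc map_replicate)

lemma Cblk_set: "set (Cblk i) \<subseteq> {1,2}"
  using Ci1_set by (auto simp: Cblk_def)

lemma Cblk_len: "i \<ge> 1 \<Longrightarrow> length (Cblk i) \<ge> 1"
  using Ci1_len[of i] by (simp add: Cblk_def numeral_eq_Suc)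

lemma Cblk_1: "Cblk 1 = [1,1,1,1,1]"
  by (simp add: Cblk_def numeral_eq_Suc)

lemma W_0[simp]: "W 0 = []" by (simp add: W_def)
lemma W_Suc: "W (Suc N) = W N @ Cblk (Suc N)"
  by (simp add: W_def)

lemma W_sig: "W (Suc N) = Cblk 1 @ sigma (W N)"
proof (induction N)
  case 0 then show ?case by (simp add: W_Suc)
next
  case (Suc N)
  have "W (Suc (Suc N)) = W (Suc N) @ Cblk (Suc (Suc N))" by (rule W_Suc)
  also have "\<dots> = Cblk 1 @ sigma (W N) @ sigma (Cblk (Suc N))"
    using Suc Cblk_Suc[of "Suc N"] by simp
  also have "\<dots> = Cblk 1 @ sigma (W (Suc N))" by (simp add: W_Suc)
  finally show ?case .
qed

lemma W_prefix: "N \<le> M \<Longrightarrow> \<exists>ys. W M = W N @ ys"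
proof (induction M rule: dec_induct)
  case base then show ?case by simp
next
  case (step n) then show ?case by (auto simp: W_Suc)
qed

lemma W_len: "length (W N) \<ge> N"
proof (induction N)
  case 0 then show ?case by simp
next
  case (Suc N) then show ?case using Cblk_len[of "Suc N"] by (simp add: W_Suc)
qed

lemma W_set: "set (W N) \<subseteq> {1,2}"
  using Cblk_set by (auto simp: W_def)

lemma c_W: assumes "1 \<le> n" "n - 1 < length (W M)" shows "c n = W M ! (n - 1)"
proof -
  have cn: "c n = W n ! (n - 1)" by (simp add: c_def W_def)
  show ?thesis
  proof (cases "n \<le> M")
    case True
    then obtain ys where "W M = W n @ ys" using W_prefix by blast
    moreover have "n - 1 < length (W n)" using W_len[of n] assms(1) by simp
    ultimately show ?thesis using cn by (simp add: nth_append)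
  next
    case False
    then obtain ys where "W n = W M @ ys" using W_prefix[of M n] by auto
    then show ?thesis using cn assms(2) by (simp add: nth_append)
  qed
qed

lemma c_12: "n \<ge> 1 \<Longrightarrow> c n = 1 \<or> c n = 2"
proof -
  assume n: "n \<ge> 1"
  have l: "n - 1 < length (W n)" using W_len[of n] n by simp
  then have "W n ! (n - 1) \<in> {1,2}" using W_set[of n] nth_mem by blast
  then show ?thesis using c_W[OF n l] by simp
qed

lemma c_small: "1 \<le> n \<Longrightarrow> n \<le> 5 \<Longrightarrow> c n = 1"
proof -
  assume n: "1 \<le> n" "n \<le> 5"
  have W1: "W 1 = [1,1,1,1,1]" using W_Suc[of 0] Cblk_1 by simp
  have "n - 1 < length (W 1)" using n W1 by simp
  then have "c n = W 1 ! (n - 1)" using c_W n by blast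
  moreover have "W 1 ! (n - 1) = 1" using n W1 by (auto simp: nth_Cons split: nat.split)
  ultimately show ?thesis by simp
qed

lemma sig_nth: "set xs \<subseteq> {1,2} \<Longrightarrow> j < length xs \<Longrightarrow>
   sigma xs ! sum_list (take j xs) = 2 \<and> (xs ! j = 2 \<longrightarrow> sigma xs ! (sum_list (take j xs) + 1) = 1)"
proof (induction xs arbitrary: j)
  case Nil then show ?case by simp
next
  case (Cons x xs)
  show ?case
  proof (cases j)
    case 0 then show ?thesis using Cons.prems by auto
  next
    case (Suc j')
    have IH: "sigma xs ! sum_list (take j' xs) = 2 \<and> (xs ! j' = 2 \<longrightarrow> sigma xs ! (sum_list (take j' xs) + 1) = 1)"
      using Cons Suc by auto
    have "x = 1 \<or> x = 2" using Cons.prems by auto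
    then show ?thesis using IH Suc by (auto simp: numeral_2_eq_2)
  qed
qed

lemma sum_c_take: "(\<And>i. 1 \<le> i \<Longrightarrow> i < k \<Longrightarrow> c i = xs ! (i - 1)) \<Longrightarrow> k - 1 \<le> length xs \<Longrightarrow>
   (\<Sum>i=1..<k. c i) = sum_list (take (k - 1) xs)"
proof (induction k)
  case 0 then show ?case by simp
next
  case (Suc k)
  show ?case
  proof (cases "k = 0")
    case True then show ?thesis by simp
  next
    case False
    have h: "(\<Sum>i=1..<k. c i) = sum_list (take (k - 1) xs)" using Suc by auto
    have "take k xs = take (k - 1) xs @ [xs ! (k - 1)]"
      using False Suc.prems(2) take_Suc_conv_app_nth[of "k - 1" xs] by simp
    moreover have "c k = xs ! (k - 1)" using Suc.prems(1)[of k] False by simp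
    ultimately show ?thesis using h False by simp
  qed
qed

lemma a_Suc: "k \<ge> 1 \<Longrightarrow> a (Suc k) = a k + c k"
  by (simp add: a_def)
lemma b_Suc: "k \<ge> 1 \<Longrightarrow> b (Suc k) = b k + c k + 1"
  by (simp add: b_def d_def)
lemma a_1: "a 1 = 6" by (simp add: a_def)
lemma b_1: "b 1 = 12" by (simp add: b_def)

lemma a_ge: "k \<ge> 1 \<Longrightarrow> a k \<ge> k + 5"
proof (induction k rule: nat_induct_at_least)
  case base then show ?case using a_1 by simp
next
  case (Suc n) then show ?case using a_Suc[of n] c_12[of n] by auto
qed

lemma key: assumes k: "k \<ge> 1" shows "c (a k) = 2 \<and> (c k = 2 \<longrightarrow> c (a k + 1) = 1)"
proof -
  define M where "M = a k + 1"
  define xs where "xs = W M"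
  have lx: "length xs \<ge> M" using W_len xs_def by simp
  have ak: "a k \<ge> k + 5" using a_ge k by simp
  have s: "(\<Sum>i=1..<k. c i) = sum_list (take (k - 1) xs)"
  proof (rule sum_c_take)
    fix i assume "1 \<le> i" "i < k"
    then show "c i = xs ! (i - 1)" using c_W[of i M] lx ak M_def xs_def by simp
  next
    show "k - 1 \<le> length xs" using lx ak M_def by simp
  qed
  have j: "k - 1 < length xs" using lx ak M_def by simp
  have st: "set xs \<subseteq> {1,2}" using W_set xs_def by simp
  have ck: "c k = xs ! (k - 1)" using c_W[of k M] xs_def lx ak M_def k by simp
  have Ws: "W (Suc M) = [1,1,1,1,1] @ sigma xs" using W_sig Cblk_1 xs_def by simp
  have lW: "length (W (Suc M)) \<ge> Suc M" using W_len by blast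
  have aks: "a k = 6 + sum_list (take (k - 1) xs)" using s by (simp add: a_def)
  have "c (a k) = W (Suc M) ! (a k - 1)" using c_W lW M_def ak by simp
  also have "\<dots> = sigma xs ! sum_list (take (k - 1) xs)" using Ws aks by simp
  finally have 1: "c (a k) = sigma xs ! sum_list (take (k - 1) xs)" .
  have "c (a k + 1) = W (Suc M) ! (a k)" using c_W[of "a k + 1" "Suc M"] lW M_def by simp
  also have "\<dots> = sigma xs ! (sum_list (take (k - 1) xs) + 1)" using Ws aks by simp
  finally have 2: "c (a k + 1) = sigma xs ! (sum_list (take (k - 1) xs) + 1)" .
  show ?thesis using sig_nth[OF st j] 1 2 ck by simp
qed

lemma a_less: assumes m: "1 \<le> m" and mn: "m < n" shows "a m < a n"
proof -
  have "Suc m \<le> n" using mn by simp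
  then show ?thesis
  proof (induction n rule: dec_induct)
    case base then show ?case using a_Suc[of m] c_12[of m] m by auto
  next
    case (step n) then show ?case using a_Suc[of n] c_12[of n] m by auto
  qed
qed

lemma a_less_iff: "1 \<le> m \<Longrightarrow> 1 \<le> n \<Longrightarrow> a m < a n \<longleftrightarrow> m < n"
  using a_less by (metis linorder_neq_iff order_less_asym)

lemma a_inj: "1 \<le> m \<Longrightarrow> 1 \<le> n \<Longrightarrow> a m = a n \<Longrightarrow> m = n"
  using a_less by (metis linorder_neq_iff less_irrefl)

lemma b_diff: "k \<ge> 1 \<Longrightarrow> b k = a k + k + 5"
proof (induction k rule: nat_induct_at_least)
  case base then show ?case using a_1 b_1 by simp
next
  case (Suc n) then show ?case using a_Suc[of n] b_Suc[of n] by simp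
qed

lemma b_inj: "1 \<le> m \<Longrightarrow> 1 \<le> n \<Longrightarrow> b m = b n \<Longrightarrow> m = n"
  using a_less b_diff by (metis add_less_mono add_less_mono1 linorder_neq_iff less_irrefl)

lemma a6: "a 6 = 11"
proof -
  have "a 2 = 7" using a_Suc[of 1] a_1 c_small[of 1] by (simp add: numeral_2_eq_2)
  then have "a 3 = 8" using a_Suc[of 2] c_small[of 2] by simp
  then have "a 4 = 9" using a_Suc[of 3] c_small[of 3] by simp
  then have "a 5 = 10" using a_Suc[of 4] c_small[of 4] by simp
  then show "a 6 = 11" using a_Suc[of 5] c_small[of 5] by simp
qed

lemma b_eq: "k \<ge> 1 \<Longrightarrow> b k = a (a k) + 1"
proof (induction k rule: nat_induct_at_least)
  case base then show ?case using a_1 b_1 a6 by simp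
next
  case (Suc n)
  have ak: "a n \<ge> 6" using a_ge[of n] Suc by simp
  have k1: "c (a n) = 2" "c n = 2 \<longrightarrow> c (a n + 1) = 1" using key[of n] Suc by auto
  have s1: "a (Suc (a n)) = a (a n) + 2" using a_Suc[of "a n"] ak k1 by simp
  show ?case
  proof (cases "c n = 1")
    case True
    then show ?thesis using Suc a_Suc[of n] b_Suc[of n] s1 by simp
  next
    case False
    then have "c n = 2" using c_12 Suc by blast
    then have "a (Suc (Suc (a n))) = a (a n) + 3" using a_Suc[of "Suc (a n)"] s1 k1 by simp
    then show ?thesis using Suc a_Suc[of n] b_Suc[of n] \<open>c n = 2\<close> by simp
  qed
qed

lemma a_ne_b: "1 \<le> j \<Longrightarrow> 1 \<le> k \<Longrightarrow> a j \<noteq> b k"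
proof
  assume j: "1 \<le> j" and k: "1 \<le> k" and e: "a j = b k"
  have ak: "a k \<ge> 1" using a_ge[of k] k by simp
  have "c (a k) = 2" using key k by blast
  then have s: "a (Suc (a k)) = a (a k) + 2" using a_Suc ak by simp
  have "a (a k) < a j" using e b_eq k by simp
  then have "a k < j" using a_less_iff ak j by blast
  moreover have "a j < a (Suc (a k))" using e b_eq k s by simp
  then have "j < Suc (a k)" using a_less_iff ak j by simp
  ultimately show False by simp
qed

lemma Q: "m \<ge> 6 \<Longrightarrow> \<exists>j\<ge>1. a j \<le> m \<and> m < a (Suc j)"
proof (induction m rule: nat_induct_at_least)
  case base
  have "a 2 = 7" using a_Suc[of 1] a_1 c_small[of 1] by (simp add: numeral_2_eq_2)
  then show ?case using a_1 by (intro exI[of _ 1]) (simp add: numeral_2_eq_2)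
next
  case (Suc m)
  then obtain j where j: "j \<ge> 1" "a j \<le> m" "m < a (Suc j)" by blast
  show ?case
  proof (cases "Suc m < a (Suc j)")
    case True then show ?thesis using j by auto
  next
    case False
    then have "Suc m = a (Suc j)" using j by simp
    moreover have "a (Suc j) < a (Suc (Suc j))" using a_less[of "Suc j"] by simp
    ultimately show ?thesis by (intro exI[of _ "Suc j"]) simp
  qed
qed

lemma R: "n \<ge> 1 \<Longrightarrow> c n = 2 \<Longrightarrow> \<exists>k\<ge>1. n = a k"
proof -
  assume n: "n \<ge> 1" and cn: "c n = 2"
  have "n \<ge> 6" using c_small[of n] n cn by (cases "n \<le> 5") auto
  then obtain j where j: "j \<ge> 1" "a j \<le> n" "n < a (Suc j)" using Q by blast
  show ?thesis
  proof (cases "n = a j")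
    case True then show ?thesis using j by blast
  next
    case False
    then have "n = a j + 1" "c j = 2" using j a_Suc[of j] c_12[of j] by auto
    then have "c n = 1" using key[of j] j by simp
    then show ?thesis using cn by simp
  qed
qed

lemma partition: "m \<ge> 6 \<Longrightarrow> (\<exists>k\<ge>1. m = a k) \<or> (\<exists>k\<ge>1. m = b k)"
proof -
  assume m: "m \<ge> 6"
  then obtain j where j: "j \<ge> 1" "a j \<le> m" "m < a (Suc j)" using Q by blast
  show ?thesis
  proof (cases "m = a j")
    case True then show ?thesis using j by blast
  next
    case False
    then have m1: "m = a j + 1" "c j = 2" using j a_Suc[of j] c_12[of j] by auto
    then obtain k where "k \<ge> 1" "j = a k" using R j by blast
    then have "m = b k" using b_eq m1 by simp
    then show ?thesis using \<open>k \<ge> 1\<close> by blast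
  qed
qed

definition S :: "(nat \<times> nat) set" where
  "S = T5 \<union> {(b n, a n) | n. n \<ge> 1} \<union> {(a n, b n) | n. n \<ge> 1}"

lemma mem_moves: "(x, y) \<notin> T5 \<Longrightarrow> q \<in> moves (x, y) \<longleftrightarrow>
   (\<exists>u<x. q = (u, y)) \<or> (\<exists>v<y. q = (x, v)) \<or> (\<exists>t. 1 \<le> t \<and> t \<le> min x y \<and> q = (x - t, y - t))"
  by (auto simp: moves_def)

lemma T5_iff[simp]: "(x, y) \<in> T5 \<longleftrightarrow> x + y \<le> 5" by (simp add: T5_def)

lemma inS: "(x, y) \<in> S \<longleftrightarrow> x + y \<le> 5 \<or> (\<exists>n\<ge>1. x = b n \<and> y = a n) \<or> (\<exists>n\<ge>1. x = a n \<and> y = b n)"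
  by (auto simp: S_def)

lemma K1_ab: assumes n: "n \<ge> 1" and q: "q \<in> moves (a n, b n)" shows "q \<notin> S"
proof -
  have an: "a n \<ge> 6" using a_ge[of n] n by simp
  have bn: "b n = a n + n + 5" using b_diff n by simp
  have nT: "(a n, b n) \<notin> T5" using an bn by simp
  have bm: "\<And>m. m \<ge> 1 \<Longrightarrow> b m = a m + m + 5" using b_diff by simp
  have am: "\<And>m. m \<ge> 1 \<Longrightarrow> a m \<ge> 6" using a_ge by fastforce
  consider (h) u where "u < a n" "q = (u, b n)" | (v) v where "v < b n" "q = (a n, v)"
    | (d) t where "1 \<le> t" "t \<le> a n" "q = (a n - t, b n - t)"
    using q mem_moves[OF nT] bn by auto
  then show ?thesis
  proof cases
    case h
    show ?thesis
    proof
      assume "q \<in> S"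
      then consider "u + b n \<le> 5" | m where "m \<ge> 1" "u = b m" "b n = a m"
        | m where "m \<ge> 1" "u = a m" "b n = b m" using inS h by auto
      then show False
      proof cases
        case 1 then show False using bn an by simp
      next
        case 2 then show False using a_ne_b n by metis
      next
        case 3 then have "m = n" using b_inj n by simp
        then show False using 3 h by simp
      qed
    qed
  next
    case v
    show ?thesis
    proof
      assume "q \<in> S"
      then consider "a n + v \<le> 5" | m where "m \<ge> 1" "a n = b m" "v = a m"
        | m where "m \<ge> 1" "a n = a m" "v = b m" using inS v by auto
      then show False
      proof cases
        case 1 then show False using an by simp
      next
        case 2 then show False using a_ne_b n by metis
      next
        case 3 then have "m = n" using a_inj n by simp
        then show False using 3 v by simp
      qed
    qed
  next
    case d
    show ?thesis
    proof
      assume "q \<in> S"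
      then consider "a n - t + (b n - t) \<le> 5" | m where "m \<ge> 1" "a n - t = b m" "b n - t = a m"
        | m where "m \<ge> 1" "a n - t = a m" "b n - t = b m" using inS d by auto
      then show False
      proof cases
        case 1 then show False using bn d(2) n by arith
      next
        case 2 then show False using bm[of m] bn d by simp
      next
        case 3
        then have "m = n" using bm[of m] bn d by simp
        then show False using 3 d by simp
      qed
    qed
  qed
qed

lemma swap_moves: "prod.swap q \<in> moves (prod.swap p) \<longleftrightarrow> q \<in> moves p"
  by (cases p; cases q) (auto simp: moves_def T5_def min.commute add.commute)

lemma S_swap: "prod.swap q \<in> S \<longleftrightarrow> q \<in> S"
  by (cases q) (auto simp: inS)

lemma K1: assumes p: "p \<in> S" and q: "q \<in> moves p" shows "q \<notin> S"
proof -
  obtain x y where xy: "p = (x, y)" by (cases p)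
  consider "x + y \<le> 5" | n where "n \<ge> 1" "x = b n" "y = a n" | n where "n \<ge> 1" "x = a n" "y = b n"
    using p xy inS by auto
  then show ?thesis
  proof cases
    case 1 then show ?thesis using q xy by (simp add: moves_def)
  next
    case 2
    have "prod.swap q \<in> moves (a n, b n)" using swap_moves[of q "(b n, a n)"] q xy 2 by simp
    then have "prod.swap q \<notin> S" using K1_ab 2 by blast
    then show ?thesis using S_swap by blast
  next
    case 3 then show ?thesis using K1_ab q xy by blast
  qed
qed

lemma K2_le: assumes nS: "(x, y) \<notin> S" and le: "x \<le> y" shows "\<exists>q\<in>moves (x, y). q \<in> S"
proof -
  have nT: "(x, y) \<notin> T5" using nS by (auto simp: S_def)
  then have s6: "x + y \<ge> 6" by simp
  show ?thesis
  proof (cases "x \<le> 5")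
    case True
    have "(x, 0) \<in> moves (x, y)" using mem_moves[OF nT] True s6 by auto
    moreover have "(x, 0) \<in> S" using True by (simp add: inS)
    ultimately show ?thesis by blast
  next
    case False
    then consider k where "k \<ge> 1" "x = a k" | k where "k \<ge> 1" "x = b k"
    proof -
      have "x \<ge> 6" using False by simp
      then show ?thesis using partition[of x] that by blast
    qed
    then show ?thesis
    proof cases
      case 2
      have "a k < b k" using b_diff 2 by simp
      then have "(x, a k) \<in> moves (x, y)" using mem_moves[OF nT] 2 le by auto
      moreover have "(x, a k) \<in> S" using 2 inS by auto
      ultimately show ?thesis by blast
    next
      case 1
      have bk: "b k = a k + k + 5" using b_diff 1 by simp
      have "y \<noteq> b k" using nS 1 inS by auto
      then consider "y > b k" | "y < b k" by linarith
      then show ?thesis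
      proof cases
        case 1
        then have "(x, b k) \<in> moves (x, y)" using mem_moves[OF nT] by auto
        moreover have "(x, b k) \<in> S" using \<open>k \<ge> 1\<close> \<open>x = a k\<close> inS by auto
        ultimately show ?thesis by blast
      next
        case 2
        show ?thesis
        proof (cases "y - x \<le> 5")
          case True
          have "(x - x, y - x) \<in> moves (x, y)" using mem_moves[OF nT] le False by auto
          moreover have "(x - x, y - x) \<in> S" using True by (simp add: inS)
          ultimately show ?thesis by blast
        next
          case False
          define m where "m = y - x - 5"
          have m1: "m \<ge> 1" "m < k" using False 2 bk \<open>x = a k\<close> m_def by auto
          have lt: "a m < a k" using a_less m1 by blast
          define t where "t = a k - a m"
          have t1: "1 \<le> t" "t \<le> min x y" using le lt t_def \<open>x = a k\<close> by auto
          have "(x - t, y - t) \<in> moves (x, y)" using mem_moves[OF nT, of "(x - t, y - t)"] t1 by blast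
          moreover have "x - t = a m" using t_def lt \<open>x = a k\<close> by simp
          moreover have "y - t = b m" using t_def lt \<open>x = a k\<close> b_diff[of m] m1 m_def False le by arith
          moreover have "(a m, b m) \<in> S" using m1 inS by auto
          ultimately show ?thesis by metis
        qed
      qed
    qed
  qed
qed

lemma K2: assumes nS: "p \<notin> S" shows "\<exists>q\<in>moves p. q \<in> S"
proof -
  obtain x y where xy: "p = (x, y)" by (cases p)
  show ?thesis
  proof (cases "x \<le> y")
    case True then show ?thesis using K2_le nS xy by blast
  next
    case False
    have "(y, x) \<notin> S" using nS xy S_swap[of "(x,y)"] by simp
    then obtain q where "q \<in> moves (y, x)" "q \<in> S" using K2_le False by fastforce
    then have "prod.swap q \<in> moves (x, y)" "prod.swap q \<in> S"
      using swap_moves[of q "(y,x)"] S_swap[of q] by auto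
    then show ?thesis using xy by blast
  qed
qed

lemma main: "isP p \<longleftrightarrow> p \<in> S"
proof (induction p rule: isP.induct)
  case (1 p)
  have "isP p \<longleftrightarrow> (\<forall>q\<in>moves p. \<not> isP q)" by (subst isP.simps) (rule refl)
  also have "\<dots> \<longleftrightarrow> (\<forall>q\<in>moves p. q \<notin> S)" using 1 by blast
  also have "\<dots> \<longleftrightarrow> p \<in> S" using K1 K2 by blast
  finally show ?case .
qed

theorem theorem4p9:
  shows "{p. isP p} = T5 \<union> {(b n, a n) | n. n \<ge> 1} \<union> {(a n, b n) | n. n \<ge> 1}"
  using main unfolding S_def by blast

end
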